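(* Let $X$ be a real Hilbert space, $A,B\colon X\rightrightarrows X$ maximally monotone, $T:=\operatorname{Id}-J_A+J_BR_A$, $v:=P_{\overline{\operatorname{ran}}(\operatorname{Id}-T)}(0)$, $D:=\operatorname{dom}A-\operatorname{dom}B$, $R:=\operatorname{ran}A+\operatorname{ran}B$, $v_D:=P_{\overline D}(0)$, $v_R:=P_{\overline R}(0)$, and assume $\overline{\operatorname{ran}}(\operatorname{Id}-T)=\overline{D\cap R}=\overline D\cap\overline R$. Let $x\in X$. Then as $n\to\infty$: (i) $\|J_AT^nx-J_AT^{n+1}x\|^2+\|J_{A^{-1}}T^nx-J_{A^{-1}}T^{n+1}x\|^2\to\|v\|^2=\|v_D\|^2+\|v_R\|^2$; (ii) $J_AT^nx-J_AT^{n+1}x\to v_R$; (iii) $J_{A^{-1}}T^nx-J_{A^{-1}}T^{n+1}x\to v_D$.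
   Context: $J_C:=(\operatorname{Id}+C)^{-1}$, $R_C:=2J_C-\operatorname{Id}$ for maximally monotone $C$; $P_S$ is the projection onto a nonempty closed convex set $S$; convergence is in norm. *)

theory Defs
  imports "HOL-Analysis.Analysis"
begin

definition graph_op :: "('a \<Rightarrow> 'a set) \<Rightarrow> ('a \<times> 'a) set" where
  "graph_op A = {(x, u). u \<in> A x}"

definition dom_op :: "('a \<Rightarrow> 'a set) \<Rightarrow> 'a set" where
  "dom_op A = {x. A x \<noteq> {}}"

definition ran_op :: "('a \<Rightarrow> 'a set) \<Rightarrow> 'a set" where
  "ran_op A = (\<Union>x. A x)"

definition inv_op :: "('a \<Rightarrow> 'a set) \<Rightarrow> ('a \<Rightarrow> 'a set)" where
  "inv_op A = (\<lambda>u. {x. u \<in> A x})"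

definition monotone_op :: "('a::real_inner \<Rightarrow> 'a set) \<Rightarrow> bool" where
  "monotone_op A \<longleftrightarrow> (\<forall>x y u v. u \<in> A x \<longrightarrow> v \<in> A y \<longrightarrow> 0 \<le> (x - y) \<bullet> (u - v))"

definition max_monotone_op :: "('a::real_inner \<Rightarrow> 'a set) \<Rightarrow> bool" where
  "max_monotone_op A \<longleftrightarrow> monotone_op A \<and>
     (\<forall>B. monotone_op B \<longrightarrow> graph_op A \<subseteq> graph_op B \<longrightarrow> B = A)"

text \<open>Resolvent J_A = (Id + A)^{-1}; y \<in> J_A x iff x \<in> y + A y iff x - y \<in> A y.
  For maximally monotone A it is single-valued with full domain (Minty).\<close>
definition resolvent :: "('a::real_inner \<Rightarrow> 'a set) \<Rightarrow> 'a \<Rightarrow> 'a" where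
  "resolvent A x = (THE y. x - y \<in> A y)"

definition reflected_resolvent :: "('a::real_inner \<Rightarrow> 'a set) \<Rightarrow> 'a \<Rightarrow> 'a" where
  "reflected_resolvent A x = 2 *\<^sub>R resolvent A x - x"

text \<open>Metric projection onto a (nonempty closed convex) set.\<close>
definition proj :: "'a::real_inner set \<Rightarrow> 'a \<Rightarrow> 'a" where
  "proj S a = (THE p. p \<in> S \<and> (\<forall>y\<in>S. dist a p \<le> dist a y))"

end

theory Submission
  imports Defs
begin

lemma strong_min:
  fixes P :: "'b::{real_inner,complete_space} \<Rightarrow> real \<Rightarrow> bool" and k lo :: real
  assumes ex: "\<exists>p c. P p c" and lb: "\<And>p c. P p c \<Longrightarrow> lo \<le> c"
    and mid: "\<And>p q c c'. P p c \<Longrightarrow> P q c' \<Longrightarrow> P ((1/2) *\<^sub>R (p+q)) ((c+c')/2 - k * (norm (p-q))\<^sup>2)"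
    and k: "k > 0"
    and clo: "\<And>p c p0 c0. (\<And>n. P (p n) (c n)) \<Longrightarrow> p \<longlonglongrightarrow> p0 \<Longrightarrow> c \<longlonglongrightarrow> c0 \<Longrightarrow> P p0 c0"
    and mono: "\<And>p c c'. P p c \<Longrightarrow> c \<le> c' \<Longrightarrow> P p c'"
  shows "\<exists>p0 m. P p0 m \<and> (\<forall>p c. P p c \<longrightarrow> m \<le> c)"
proof -
  define M where "M = {c. \<exists>p. P p c}"
  define m where "m = Inf M"
  have Mne: "M \<noteq> {}" using ex by (auto simp: M_def)
  have bdd: "bdd_below M" using lb by (auto simp: M_def bdd_below_def)
  have mle: "\<And>p c. P p c \<Longrightarrow> m \<le> c"
    unfolding m_def by (rule cInf_lower) (use bdd in \<open>auto simp: M_def\<close>)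
  have "\<forall>n. \<exists>q. P q (m + 1/(real n+1))"
  proof
    fix n
    have "m < m + 1/(real n+1)" by simp
    then obtain c where "c \<in> M" "c < m + 1/(real n+1)"
      using cInf_lessD[OF Mne] unfolding m_def by blast
    then obtain q where q: "P q c" "c < m + 1/(real n+1)" by (auto simp: M_def)
    then have "P q (m + 1/(real n+1))" using mono[OF q(1)] by simp
    then show "\<exists>q. P q (m + 1/(real n+1))" by blast
  qed
  then obtain p where p: "\<And>n. P (p n) (m + 1/(real n+1))" by metis
  have aux: "\<And>a b X. m \<le> (m + a + (m + b))/2 - X \<Longrightarrow> 2*X \<le> a + b" by (auto simp: field_simps)
  have dist_bound: "(norm (p i - p j))\<^sup>2 \<le> (1/(real i+1) + 1/(real j+1)) / (2*k)" for i j
  proof -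
    have "m \<le> ((m + 1/(real i+1)) + (m + 1/(real j+1)))/2 - k * (norm (p i - p j))\<^sup>2"
      by (rule mle[OF mid[OF p p]])
    then have "2*(k * (norm (p i - p j))\<^sup>2) \<le> (1/(real i+1) + 1/(real j+1))" using aux by blast
    then show ?thesis using k by (simp add: pos_le_divide_eq mult_ac)
  qed
  have "Cauchy p"
  proof (rule metric_CauchyI)
    fix e :: real assume e: "e > 0"
    obtain N :: nat where N: "1/(k*e^2) < real N" using reals_Archimedean2 by blast
    have "1/(real N+1) < k*e^2"
    proof -
      have "0 < k*e^2" using k e by simp
      then have "1 < (real N + 1) * (k*e^2)" using N by (simp add: field_simps)
      then show ?thesis by (simp add: field_simps)
    qed
    show "\<exists>M. \<forall>i\<ge>M. \<forall>j\<ge>M. dist (p i) (p j) < e"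
    proof (intro exI allI impI)
      fix i j assume ij: "N \<le> i" "N \<le> j"
      have "1/(real i+1) \<le> 1/(real N+1)" "1/(real j+1) \<le> 1/(real N+1)" using ij
        by (auto intro!: divide_left_mono)
      then have "(norm (p i - p j))\<^sup>2 \<le> (2/(real N+1))/(2*k)"
      proof -
        have "(1/(real i+1) + 1/(real j+1))/(2*k) \<le> (2/(real N+1))/(2*k)"
          apply (rule divide_right_mono) using \<open>1/(real i+1) \<le> 1/(real N+1)\<close> \<open>1/(real j+1) \<le> 1/(real N+1)\<close> k by auto
        then show ?thesis using dist_bound[of i j] by linarith
      qed
      also have "\<dots> = (1/(real N+1))/k" by simp
      also have "\<dots> < (k*e^2)/k" using \<open>1/(real N+1) < k*e^2\<close> k by (rule divide_strict_right_mono)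
      also have "\<dots> = e^2" using k by simp
      finally have "(norm (p i - p j))\<^sup>2 < e^2" .
      then show "dist (p i) (p j) < e" using e by (simp add: dist_norm power_less_imp_less_base)
    qed
  qed
  then obtain p0 where p0: "p \<longlonglongrightarrow> p0" using convergent_eq_Cauchy by blast
  have "(\<lambda>n. m + 1/(real n+1)) \<longlonglongrightarrow> m"
    using LIMSEQ_inverse_real_of_nat_add[of m] by (simp add: inverse_eq_divide add.commute)
  then have "P p0 m" using clo[OF p p0] by simp
  then show ?thesis using mle by blast
qed

lemma small_t:
  fixes a b :: real
  assumes "\<And>t. 0 < t \<Longrightarrow> t \<le> 1 \<Longrightarrow> 0 \<le> 2*t*a + t^2*b"
  shows "0 \<le> a"
proof (rule ccontr)
  assume a: "\<not> 0 \<le> a"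
  show False
  proof (cases "b \<le> 0")
    case True
    then show False using assms[of 1] a by simp
  next
    case False
    define t where "t = min 1 (-a/b)"
    have "a/b < 0" using a False by (simp add: divide_neg_pos)
    then have t: "0 < t" "t \<le> 1" "t \<le> -a/b" by (auto simp: t_def)
    have "t*b \<le> (-a/b)*b" using t(3) False by (intro mult_right_mono) auto
    then have "t*b \<le> -a" using False by simp
    then have "t*(t*b) \<le> t*(-a)" using t(1) by (intro mult_left_mono) auto
    then have "t^2*b \<le> t*(-a)" by (simp add: power2_eq_square mult.assoc)
    then have "2*t*a + t^2*b \<le> t*a" by (simp add: algebra_simps)
    also have "\<dots> < 0" using t(1) a by (simp add: mult_pos_neg)
    finally show False using assms[OF t(1) t(2)] by simp
  qed
qed

lemma midpoint_norm2:
  fixes p q :: "'b::real_inner"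
  shows "(norm ((1/2) *\<^sub>R (p+q)))\<^sup>2 = ((norm p)\<^sup>2 + (norm q)\<^sup>2)/2 - (norm (p-q))\<^sup>2/4"
  unfolding power2_norm_eq_inner
  apply (simp add: inner_add_left inner_add_right inner_diff_left inner_diff_right inner_commute algebra_simps)
  by (simp add: field_simps)

lemma proj0:
  fixes S :: "'a::{real_inner,complete_space} set"
  assumes cl: "closed S" and cv: "convex S" and ne: "S \<noteq> {}"
  shows "proj S 0 \<in> S" "\<And>y. y \<in> S \<Longrightarrow> norm (proj S 0) \<le> norm y"
    "\<And>y. y \<in> S \<Longrightarrow> 0 \<le> (y - proj S 0) \<bullet> proj S 0"
proof -
  define P where "P = (\<lambda>p c. p \<in> S \<and> (norm p)\<^sup>2 \<le> c)"
  have "\<exists>p0 m. P p0 m \<and> (\<forall>p c. P p c \<longrightarrow> m \<le> c)"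
  proof (rule strong_min[where k="1/4" and lo=0])
    show "\<exists>p c. P p c" using ne by (auto simp: P_def)
    show "\<And>p c. P p c \<Longrightarrow> 0 \<le> c" by (auto simp: P_def intro: order_trans[OF zero_le_power2])
    show "P ((1/2) *\<^sub>R (p+q)) ((c+c')/2 - 1/4 * (norm (p-q))\<^sup>2)" if "P p c" "P q c'" for p q c c'
    proof -
      have "(1/2) *\<^sub>R (p+q) = (1/2) *\<^sub>R p + (1/2) *\<^sub>R q" by (simp add: scaleR_right_distrib)
      also have "\<dots> \<in> S" using that by (intro convexD[OF cv]) (auto simp: P_def)
      finally have "(1/2) *\<^sub>R (p+q) \<in> S" .
      then show ?thesis using that midpoint_norm2[of p q] by (auto simp: P_def)
    qed
    show "P p0 c0" if "\<And>n. P (p n) (c n)" "p \<longlonglongrightarrow> p0" "c \<longlonglongrightarrow> c0" for p c p0 c0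
    proof -
      have "p0 \<in> S" using closed_sequentially[OF cl] that by (auto simp: P_def)
      moreover have "(\<lambda>n. (norm (p n))\<^sup>2) \<longlonglongrightarrow> (norm p0)\<^sup>2" by (intro tendsto_intros that(2))
      then have "(norm p0)\<^sup>2 \<le> c0" using that by (auto simp: P_def intro: LIMSEQ_le)
      ultimately show ?thesis by (simp add: P_def)
    qed
  qed (auto simp: P_def)
  then obtain p0 m where p0: "P p0 m" "\<And>p c. P p c \<Longrightarrow> m \<le> c" by blast
  have p0S: "p0 \<in> S" using p0 by (simp add: P_def)
  have p0min: "norm p0 \<le> norm y" if "y \<in> S" for y
  proof -
    have "m \<le> (norm y)\<^sup>2" using p0(2)[of y "(norm y)\<^sup>2"] that by (simp add: P_def)
    moreover have "(norm p0)\<^sup>2 \<le> m" using p0(1) unfolding P_def by blast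
    ultimately have "(norm p0)\<^sup>2 \<le> (norm y)\<^sup>2" by linarith
    then show ?thesis by (simp add: power2_le_iff_abs_le)
  qed
  have uniq: "q = p0" if "q \<in> S" "\<forall>y\<in>S. dist 0 q \<le> dist 0 y" for q
  proof -
    have nq: "norm q = norm p0" using that p0min[of q] p0S by (auto intro: antisym)
    have "(1/2) *\<^sub>R (q+p0) = (1/2) *\<^sub>R q + (1/2) *\<^sub>R p0" by (simp add: scaleR_right_distrib)
    also have "\<dots> \<in> S" using that(1) p0S by (intro convexD[OF cv]) auto
    finally have "(1/2) *\<^sub>R (q+p0) \<in> S" .
    then have "norm p0 \<le> norm ((1/2) *\<^sub>R (q+p0))" using p0min by blast
    then have "(norm p0)\<^sup>2 \<le> (norm ((1/2) *\<^sub>R (q+p0)))\<^sup>2" by (simp add: power_mono)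
    moreover note midpoint_norm2[of q p0]
    moreover have "(norm q)\<^sup>2 = (norm p0)\<^sup>2" using nq by simp
    ultimately have "(norm (q - p0))\<^sup>2 \<le> 0" by argo
    then show ?thesis by simp
  qed
  have pe: "proj S 0 = p0" unfolding proj_def
  proof (rule the_equality)
    show "p0 \<in> S \<and> (\<forall>y\<in>S. dist 0 p0 \<le> dist 0 y)" using p0S p0min by (simp add: dist_0_norm)
    show "q = p0" if "q \<in> S \<and> (\<forall>y\<in>S. dist 0 q \<le> dist 0 y)" for q using that uniq by blast
  qed
  show "proj S 0 \<in> S" using pe p0S by simp
  show "\<And>y. y \<in> S \<Longrightarrow> norm (proj S 0) \<le> norm y" using pe p0min by simp
  show "0 \<le> (y - proj S 0) \<bullet> proj S 0" if y: "y \<in> S" for y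
  proof -
    have "0 \<le> 2*t*((y - p0) \<bullet> p0) + t^2*((norm (y - p0))\<^sup>2)" if t: "0 < t" "t \<le> 1" for t
    proof -
      have "p0 + t *\<^sub>R (y - p0) = (1 - t) *\<^sub>R p0 + t *\<^sub>R y" by (simp add: algebra_simps)
      also have "\<dots> \<in> S" using p0S y t by (intro convexD[OF cv]) auto
      finally have "p0 + t *\<^sub>R (y - p0) \<in> S" .
      then have "norm p0 \<le> norm (p0 + t *\<^sub>R (y - p0))" using p0min by blast
      then have "(norm p0)\<^sup>2 \<le> (norm (p0 + t *\<^sub>R (y - p0)))\<^sup>2" by (simp add: power_mono)
      also have "\<dots> = (norm p0)\<^sup>2 + 2*t*((y - p0) \<bullet> p0) + t^2*((norm (y - p0))\<^sup>2)"
        unfolding power2_norm_eq_inner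
        by (simp add: inner_add_left inner_add_right inner_diff_left inner_diff_right inner_commute algebra_simps power2_eq_square)
      finally show ?thesis by simp
    qed
    then have "0 \<le> (y - p0) \<bullet> p0" by (rule small_t)
    then show ?thesis using pe by simp
  qed
qed

lemma max_monotone_iff:
  "max_monotone_op A \<longleftrightarrow> monotone_op A \<and>
     (\<forall>x u. (\<forall>y w. w \<in> A y \<longrightarrow> 0 \<le> (x - y) \<bullet> (u - w)) \<longrightarrow> u \<in> A x)"
proof
  assume m: "max_monotone_op A"
  then have mo: "monotone_op A" by (simp add: max_monotone_op_def)
  have "u \<in> A x" if h: "\<forall>y w. w \<in> A y \<longrightarrow> 0 \<le> (x - y) \<bullet> (u - w)" for x u
  proof -
    define B where "B = A(x := insert u (A x))"
    have "monotone_op B" unfolding monotone_op_def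
    proof (intro allI impI)
      fix x' y' u' v' assume "u' \<in> B x'" "v' \<in> B y'"
      then consider "u' \<in> A x'" "v' \<in> A y'" | "x' = x" "u' = u" "v' \<in> A y'"
        | "y' = x" "v' = u" "u' \<in> A x'" | "x' = x" "u' = u" "y' = x" "v' = u"
        by (auto simp: B_def split: if_splits)
      then show "0 \<le> (x' - y') \<bullet> (u' - v')"
      proof cases
        case 1 then show ?thesis using mo by (auto simp: monotone_op_def)
      next
        case 2 then show ?thesis using h by auto
      next
        case 3
        have "0 \<le> (x - x') \<bullet> (u - u')" using h 3 by auto
        also have "(x - x') \<bullet> (u - u') = (x' - y') \<bullet> (u' - v')" using 3
          by (simp add: inner_diff_left inner_diff_right)
        finally show ?thesis .
      next
        case 4 then show ?thesis by simp
      qed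
    qed
    moreover have "graph_op A \<subseteq> graph_op B" by (auto simp: graph_op_def B_def)
    ultimately have "B = A" using m by (auto simp: max_monotone_op_def)
    then show ?thesis by (metis B_def fun_upd_same insertI1)
  qed
  then show "monotone_op A \<and> (\<forall>x u. (\<forall>y w. w \<in> A y \<longrightarrow> 0 \<le> (x - y) \<bullet> (u - w)) \<longrightarrow> u \<in> A x)"
    using mo by blast
next
  assume h: "monotone_op A \<and> (\<forall>x u. (\<forall>y w. w \<in> A y \<longrightarrow> 0 \<le> (x - y) \<bullet> (u - w)) \<longrightarrow> u \<in> A x)"
  show "max_monotone_op A" unfolding max_monotone_op_def
  proof (intro conjI allI impI)
    show "monotone_op A" using h by blast
    fix B assume B: "monotone_op B" "graph_op A \<subseteq> graph_op B"
    have sub: "w \<in> B y" if "w \<in> A y" for y w using B(2) that by (auto simp: graph_op_def)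
    show "B = A"
    proof (rule ext, rule set_eqI, rule iffI)
      fix x u assume "u \<in> B x"
      then have "\<forall>y w. w \<in> A y \<longrightarrow> 0 \<le> (x - y) \<bullet> (u - w)"
        using B(1) sub by (auto simp: monotone_op_def)
      then show "u \<in> A x" using h by blast
    next
      fix x u assume "u \<in> A x" then show "u \<in> B x" by (rule sub)
    qed
  qed
qed

lemma maxmono_point:
  assumes "max_monotone_op A" "\<And>y w. w \<in> A y \<Longrightarrow> 0 \<le> (x - y) \<bullet> (u - w)"
  shows "u \<in> A x"
  using assms max_monotone_iff by blast

lemma maxmono_mono:
  assumes "max_monotone_op A" "u \<in> A x" "v \<in> A y"
  shows "0 \<le> (x - y) \<bullet> (u - v)"
  using assms by (auto simp: max_monotone_op_def monotone_op_def)

lemma maxmono_translate: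
  assumes "max_monotone_op A"
  shows "max_monotone_op (\<lambda>y. A (y + z))"
  unfolding max_monotone_iff
proof (intro conjI allI impI)
  show "monotone_op (\<lambda>y. A (y + z))" unfolding monotone_op_def
  proof (intro allI impI)
    fix x y u v assume "u \<in> A (x + z)" "v \<in> A (y + z)"
    then have "0 \<le> ((x+z) - (y+z)) \<bullet> (u - v)" by (rule maxmono_mono[OF assms])
    then show "0 \<le> (x - y) \<bullet> (u - v)" by simp
  qed
  fix x u assume h: "\<forall>y w. w \<in> A (y + z) \<longrightarrow> 0 \<le> (x - y) \<bullet> (u - w)"
  have "u \<in> A (x + z)"
  proof (rule maxmono_point[OF assms])
    fix y w assume "w \<in> A y"
    then have "w \<in> A ((y - z) + z)" by simp
    then have "0 \<le> (x - (y - z)) \<bullet> (u - w)" using h by blast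
    then show "0 \<le> (x + z - y) \<bullet> (u - w)" by (simp add: algebra_simps)
  qed
  then show "u \<in> A (x + z)" .
qed

lemma maxmono_scale:
  assumes "max_monotone_op A" "\<mu> > 0"
  shows "max_monotone_op (\<lambda>y. {w. (1/\<mu>) *\<^sub>R w \<in> A y})"
  unfolding max_monotone_iff
proof (intro conjI allI impI)
  show "monotone_op (\<lambda>y. {w. (1/\<mu>) *\<^sub>R w \<in> A y})" unfolding monotone_op_def
  proof (intro allI impI)
    fix x y u v assume "u \<in> {w. (1/\<mu>) *\<^sub>R w \<in> A x}" "v \<in> {w. (1/\<mu>) *\<^sub>R w \<in> A y}"
    then have "0 \<le> (x - y) \<bullet> ((1/\<mu>) *\<^sub>R u - (1/\<mu>) *\<^sub>R v)" by (intro maxmono_mono[OF assms(1)]) auto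
    also have "(x - y) \<bullet> ((1/\<mu>) *\<^sub>R u - (1/\<mu>) *\<^sub>R v) = (1/\<mu>) * ((x - y) \<bullet> (u - v))"
      by (simp add: inner_diff_right diff_divide_distrib)
    finally show "0 \<le> (x - y) \<bullet> (u - v)" using assms(2) by (simp add: zero_le_divide_iff)
  qed
  fix x u assume h: "\<forall>y w. w \<in> {w. (1/\<mu>) *\<^sub>R w \<in> A y} \<longrightarrow> 0 \<le> (x - y) \<bullet> (u - w)"
  have "(1/\<mu>) *\<^sub>R u \<in> A x"
  proof (rule maxmono_point[OF assms(1)])
    fix y w assume "w \<in> A y"
    then have "\<mu> *\<^sub>R w \<in> {w. (1/\<mu>) *\<^sub>R w \<in> A y}" using assms(2) by simp
    then have "0 \<le> (x - y) \<bullet> (u - \<mu> *\<^sub>R w)" using h by blast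
    also have "(x - y) \<bullet> (u - \<mu> *\<^sub>R w) = \<mu> * ((x - y) \<bullet> ((1/\<mu>) *\<^sub>R u - w))"
      using assms(2) by (simp add: inner_diff_right algebra_simps)
    finally show "0 \<le> (x - y) \<bullet> ((1/\<mu>) *\<^sub>R u - w)" using assms(2) by (simp add: zero_le_mult_iff)
  qed
  then show "u \<in> {w. (1/\<mu>) *\<^sub>R w \<in> A x}" by simp
qed

lemma maxmono_inv:
  assumes "max_monotone_op A"
  shows "max_monotone_op (inv_op A)"
  unfolding max_monotone_iff
proof (intro conjI allI impI)
  show "monotone_op (inv_op A)" unfolding monotone_op_def inv_op_def
  proof (intro allI impI)
    fix x y u v assume "u \<in> {xa. x \<in> A xa}" "v \<in> {x. y \<in> A x}"
    then have "0 \<le> (u - v) \<bullet> (x - y)" by (intro maxmono_mono[OF assms]) auto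
    then show "0 \<le> (x - y) \<bullet> (u - v)" by (simp add: inner_commute)
  qed
  fix x u assume h: "\<forall>y w. w \<in> inv_op A y \<longrightarrow> 0 \<le> (x - y) \<bullet> (u - w)"
  have "x \<in> A u"
  proof (rule maxmono_point[OF assms])
    fix y w assume "w \<in> A y"
    then have "y \<in> inv_op A w" by (simp add: inv_op_def)
    then have "0 \<le> (x - w) \<bullet> (u - y)" using h by blast
    then show "0 \<le> (u - y) \<bullet> (x - w)" by (simp add: inner_commute)
  qed
  then show "u \<in> inv_op A x" by (simp add: inv_op_def)
qed

definition phi :: "'a::real_inner \<Rightarrow> 'a \<Rightarrow> 'a \<times> 'a \<Rightarrow> real" where
  "phi y w p = fst p \<bullet> w + y \<bullet> snd p - y \<bullet> w"

lemma phi_aff: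
  assumes "a + b = 1"
  shows "phi y w (a *\<^sub>R p + b *\<^sub>R q) = a * phi y w p + b * phi y w q"
proof -
  have "phi y w (a *\<^sub>R p + b *\<^sub>R q) = a * (fst p \<bullet> w) + b * (fst q \<bullet> w) + a * (y \<bullet> snd p) + b * (y \<bullet> snd q) - (a + b) * (y \<bullet> w)"
    using assms by (simp add: phi_def inner_add_left inner_add_right)
  also have "\<dots> = a * phi y w p + b * phi y w q" by (simp add: phi_def algebra_simps)
  finally show ?thesis .
qed

lemma phi_graph:
  assumes "max_monotone_op A" "w \<in> A y" "w0 \<in> A y0"
  shows "phi y w (y0, w0) \<le> y0 \<bullet> w0"
proof -
  have "0 \<le> (y0 - y) \<bullet> (w0 - w)" by (rule maxmono_mono[OF assms(1,3,2)])
  then show ?thesis by (simp add: phi_def inner_diff_left inner_diff_right inner_commute)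
qed

lemma fitz_ge:
  assumes "max_monotone_op A" "\<And>y w. w \<in> A y \<Longrightarrow> phi y w (x, u) \<le> c"
  shows "x \<bullet> u \<le> c"
proof (rule ccontr)
  assume "\<not> x \<bullet> u \<le> c"
  have "u \<in> A x"
  proof (rule maxmono_point[OF assms(1)])
    fix y w assume "w \<in> A y"
    then have "phi y w (x, u) \<le> c" by (rule assms(2))
    moreover have "(x - y) \<bullet> (u - w) = x \<bullet> u - phi y w (x, u)"
      by (simp add: phi_def inner_diff_left inner_diff_right inner_commute)
    ultimately show "0 \<le> (x - y) \<bullet> (u - w)" using \<open>\<not> x \<bullet> u \<le> c\<close> by linarith
  qed
  then have "phi x u (x, u) \<le> c" by (rule assms(2))
  then show False using \<open>\<not> x \<bullet> u \<le> c\<close> by (simp add: phi_def inner_commute)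
qed

lemma graph_nonempty:
  assumes "max_monotone_op A"
  shows "\<exists>y w. w \<in> A y"
proof (rule ccontr)
  assume "\<not> (\<exists>y w. w \<in> A y)"
  then have "(0::'a) \<in> A 0" by (intro maxmono_point[OF assms]) auto
  then show False using \<open>\<not> (\<exists>y w. w \<in> A y)\<close> by blast
qed

lemma norm_pair2: "(norm p)\<^sup>2 = (norm (fst p))\<^sup>2 + (norm (snd p))\<^sup>2"
  by (simp add: norm_prod_def)

lemma minty0:
  fixes A :: "'a::{real_inner,complete_space} \<Rightarrow> 'a set"
  assumes mm: "max_monotone_op A"
  shows "\<exists>x. - x \<in> A x"
proof -
  define P where "P = (\<lambda>(p::'a\<times>'a) c. \<forall>y w. w \<in> A y \<longrightarrow> phi y w p + (norm p)\<^sup>2/2 \<le> c)"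
  have "\<exists>p0 m. P p0 m \<and> (\<forall>p c. P p c \<longrightarrow> m \<le> c)"
  proof (rule strong_min[where k="1/8" and lo=0])
    obtain y0 w0 where g0: "w0 \<in> A y0" using graph_nonempty[OF mm] by blast
    have "P (y0, w0) (y0 \<bullet> w0 + (norm (y0, w0))\<^sup>2/2)"
      unfolding P_def using phi_graph[OF mm _ g0] by fastforce
    then show "\<exists>p c. P p c" by blast
  next
    fix p c assume "P p c"
    obtain x u where p: "p = (x, u)" by fastforce
    have "x \<bullet> u \<le> c - (norm p)\<^sup>2/2"
      using \<open>P p c\<close> unfolding P_def p by (intro fitz_ge[OF mm]) (auto simp: algebra_simps)
    moreover have "(norm p)\<^sup>2 = (norm x)\<^sup>2 + (norm u)\<^sup>2" by (simp add: norm_pair2 p)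
    moreover have "0 \<le> (norm (x + u))\<^sup>2" by simp
    moreover have "(norm (x + u))\<^sup>2 = (norm x)\<^sup>2 + 2 * (x \<bullet> u) + (norm u)\<^sup>2"
      unfolding power2_norm_eq_inner by (simp add: inner_add_left inner_add_right inner_commute)
    ultimately show "0 \<le> c" by argo
  next
    fix p q c c' assume pq: "P p c" "P q c'"
    show "P ((1/2) *\<^sub>R (p+q)) ((c+c')/2 - 1/8 * (norm (p-q))\<^sup>2)"
      unfolding P_def
    proof (intro allI impI)
      fix y w assume yw: "w \<in> A y"
      have "(1/2) *\<^sub>R (p+q) = (1/2) *\<^sub>R p + (1/2) *\<^sub>R q" by (simp add: scaleR_right_distrib)
      then have e1: "phi y w ((1/2) *\<^sub>R (p+q)) = 1/2 * phi y w p + 1/2 * phi y w q"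
        by (simp add: phi_aff)
      have "phi y w p + (norm p)\<^sup>2/2 \<le> c" "phi y w q + (norm q)\<^sup>2/2 \<le> c'"
        using pq yw unfolding P_def by auto
      with e1 midpoint_norm2[of p q]
      show "phi y w ((1/2) *\<^sub>R (p+q)) + (norm ((1/2) *\<^sub>R (p+q)))\<^sup>2/2 \<le> (c+c')/2 - 1/8 * (norm (p-q))\<^sup>2"
        by argo
    qed
  next
    fix p c p0 c0 assume h: "\<And>n. P (p n) (c n)" "p \<longlonglongrightarrow> p0" "c \<longlonglongrightarrow> c0"
    show "P p0 c0" unfolding P_def
    proof (intro allI impI)
      fix y w assume yw: "w \<in> A y"
      have "(\<lambda>n. phi y w (p n) + (norm (p n))\<^sup>2/2) \<longlonglongrightarrow> phi y w p0 + (norm p0)\<^sup>2/2"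
        unfolding phi_def by (intro tendsto_intros h(2)) auto
      then show "phi y w p0 + (norm p0)\<^sup>2/2 \<le> c0"
        using h yw unfolding P_def by (auto intro: LIMSEQ_le)
    qed
  next
    fix p c c' assume "P p c" "c \<le> c'" then show "P p c'" unfolding P_def by force
  qed simp
  then obtain p0 m where p0: "P p0 m" and pmin: "\<And>p c. P p c \<Longrightarrow> m \<le> c" by blast
  obtain x0 u0 where p0e: "p0 = (x0, u0)" by fastforce
  define c0 where "c0 = m - (norm p0)\<^sup>2/2"
  have phi0: "phi y w p0 \<le> c0" if "w \<in> A y" for y w using p0 that unfolding P_def c0_def by force
  have xu0: "x0 \<bullet> u0 \<le> c0" using phi0 unfolding p0e by (intro fitz_ge[OF mm])
  have key: "0 \<le> (-u0 - y1) \<bullet> (-x0 - w1) - (norm (x0 + u0))\<^sup>2" if g: "w1 \<in> A y1" for y1 w1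
  proof -
    define g where "g = (y1, w1)"
    have ineq: "0 \<le> 2*t*((y1 \<bullet> w1 - c0 + (g - p0) \<bullet> p0)/2) + t^2*((norm (g - p0))\<^sup>2/2)"
      if t: "0 < t" "t \<le> 1" for t
    proof -
      define pt where "pt = (1 - t) *\<^sub>R p0 + t *\<^sub>R g"
      have "P pt ((1-t)*c0 + t*(y1 \<bullet> w1) + (norm pt)\<^sup>2/2)" unfolding P_def
      proof (intro allI impI)
        fix y w assume yw: "w \<in> A y"
        have "phi y w pt = (1-t) * phi y w p0 + t * phi y w g" unfolding pt_def by (simp add: phi_aff)
        also have "\<dots> \<le> (1-t) * c0 + t * (y1 \<bullet> w1)"
          using phi0[OF yw] phi_graph[OF mm yw g] t unfolding g_def
          by (intro add_mono mult_left_mono) auto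
        finally show "phi y w pt + (norm pt)\<^sup>2/2 \<le> (1-t)*c0 + t*(y1 \<bullet> w1) + (norm pt)\<^sup>2/2" by simp
      qed
      then have "m \<le> (1-t)*c0 + t*(y1 \<bullet> w1) + (norm pt)\<^sup>2/2" by (rule pmin)
      moreover have pte: "pt = p0 + t *\<^sub>R (g - p0)" unfolding pt_def by (simp add: algebra_simps)
      have "(norm pt)\<^sup>2 = (norm p0)\<^sup>2 + 2*t*((g - p0) \<bullet> p0) + t^2*(norm (g - p0))\<^sup>2"
        unfolding pte power2_norm_eq_inner
        by (simp add: inner_add_left inner_add_right inner_commute algebra_simps power2_eq_square)
      moreover have "m = c0 + (norm p0)\<^sup>2/2" by (simp add: c0_def)
      ultimately show ?thesis by (simp add: algebra_simps) argo
    qed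
    have "0 \<le> (y1 \<bullet> w1 - c0 + (g - p0) \<bullet> p0)/2" by (rule small_t[OF ineq])
    moreover have "(g - p0) \<bullet> p0 = (y1 - x0) \<bullet> x0 + (w1 - u0) \<bullet> u0"
      by (simp add: g_def p0e)
    moreover have "(-u0 - y1) \<bullet> (-x0 - w1) - (norm (x0 + u0))\<^sup>2
        = y1 \<bullet> w1 - x0 \<bullet> u0 + ((y1 - x0) \<bullet> x0 + (w1 - u0) \<bullet> u0)"
      unfolding power2_norm_eq_inner
      by (simp add: inner_add_left inner_add_right inner_diff_left inner_diff_right inner_commute algebra_simps)
    ultimately show ?thesis using xu0 by argo
  qed
  have inA: "-x0 \<in> A (-u0)"
  proof (rule maxmono_point[OF mm])
    fix y w assume "w \<in> A y"
    from key[OF this] show "0 \<le> (-u0 - y) \<bullet> (-x0 - w)"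
      using zero_le_power2[of "norm (x0 + u0)"] by linarith
  qed
  have "(norm (x0 + u0))\<^sup>2 \<le> 0" using key[OF inA] by simp
  then have "u0 = -x0" by (simp add: add_eq_0_iff)
  then show ?thesis using inA by auto
qed

lemma minty:
  fixes A :: "'a::{real_inner,complete_space} \<Rightarrow> 'a set"
  assumes mm: "max_monotone_op A"
  shows "\<exists>x. z - x \<in> A x"
proof -
  obtain y where "- y \<in> A (y + z)" using minty0[OF maxmono_translate[OF mm, of z]] by blast
  then have "z - (y + z) \<in> A (y + z)" by simp
  then show ?thesis by blast
qed

lemma resolvent_unique:
  assumes "max_monotone_op A" "z - x \<in> A x" "z - y \<in> A y"
  shows "x = y"
proof -
  have "0 \<le> (x - y) \<bullet> ((z - x) - (z - y))" by (rule maxmono_mono[OF assms(1-3)])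
  also have "(z - x) - (z - y) = - (x - y)" by simp
  finally have "0 \<le> - ((x - y) \<bullet> (x - y))" by (simp only: inner_minus_right)
  then have "(x - y) \<bullet> (x - y) = 0" using inner_ge_zero[of "x - y"] by linarith
  then show ?thesis by simp
qed

lemma resolvent_eq:
  fixes A :: "'a::{real_inner,complete_space} \<Rightarrow> 'a set"
  assumes "max_monotone_op A" "z - x \<in> A x"
  shows "resolvent A z = x"
  unfolding resolvent_def
  by (rule the_equality) (use assms resolvent_unique in blast)+

lemma resolvent_in:
  fixes A :: "'a::{real_inner,complete_space} \<Rightarrow> 'a set"
  assumes "max_monotone_op A"
  shows "z - resolvent A z \<in> A (resolvent A z)"
proof -
  obtain x where "z - x \<in> A x" using minty[OF assms] by blast
  then show ?thesis using resolvent_eq[OF assms] by simp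
qed

lemma resolvent_inv:
  fixes A :: "'a::{real_inner,complete_space} \<Rightarrow> 'a set"
  assumes "max_monotone_op A"
  shows "resolvent (inv_op A) z = z - resolvent A z"
proof (rule resolvent_eq[OF maxmono_inv[OF assms]])
  show "z - (z - resolvent A z) \<in> inv_op A (z - resolvent A z)"
    using resolvent_in[OF assms, of z] by (simp add: inv_op_def)
qed

lemma minty_scaled:
  fixes A :: "'a::{real_inner,complete_space} \<Rightarrow> 'a set"
  assumes "max_monotone_op A" "\<mu> > 0"
  shows "\<exists>y. (1/\<mu>) *\<^sub>R (z - y) \<in> A y"
  using minty[OF maxmono_scale[OF assms], of z] by simp

lemma small_r:
  fixes r lam C K e :: real
  assumes r: "0 \<le> r" and ineq: "r^2 \<le> lam * (K * (r + C))" and "0 < lam" "0 \<le> C" "0 \<le> K"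
    and small: "lam * (K * (1 + C)) < 1" "lam * (K * (1 + C)) < e^2" and e: "0 < e"
  shows "r < e"
proof -
  have r1: "r < 1"
  proof (rule ccontr)
    assume "\<not> r < 1"
    then have "1 \<le> r" by simp
    have "0 \<le> lam * (K * C)" using assms by simp
    then have "lam * (K * C) * 1 \<le> lam * (K * C) * r" using mult_left_mono[OF \<open>1 \<le> r\<close>] by blast
    then have "lam * (K * C) \<le> lam * (K * C) * r" by simp
    then have "r^2 \<le> lam * (K * (1 + C)) * r" using ineq by (simp add: algebra_simps)
    also have "\<dots> < 1 * r" using small(1) \<open>1 \<le> r\<close> by (intro mult_strict_right_mono) auto
    also have "\<dots> \<le> r^2" using \<open>1 \<le> r\<close> by (simp add: power2_eq_square)
    finally show False by simp
  qed
  have "lam * (K * (r + C)) \<le> lam * (K * (1 + C))" using r1 assms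
    by (intro mult_left_mono) auto
  then have "r^2 < e^2" using ineq small(2) by linarith
  then show ?thesis using e r by (simp add: power_less_imp_less_base)
qed

lemma dom_segment_closure:
  fixes A :: "'a::{real_inner,complete_space} \<Rightarrow> 'a set"
  assumes mm: "max_monotone_op A" and y1: "y1s \<in> A y1" and y2: "y2s \<in> A y2"
    and t: "0 \<le> t" "t \<le> 1"
  shows "(1 - t) *\<^sub>R y1 + t *\<^sub>R y2 \<in> closure (dom_op A)"
proof -
  define x where "x = (1 - t) *\<^sub>R y1 + t *\<^sub>R y2"
  define K where "K = norm y1s + norm y2s"
  define C where "C = norm (x - y1) + norm (x - y2)"
  have K0: "0 \<le> K" and C0: "0 \<le> C" by (auto simp: K_def C_def)
  have bound: "(norm (x - xl))^2 \<le> lam * (K * (norm (x - xl) + C))"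
    if lam: "0 < lam" and xl: "(1/lam) *\<^sub>R (x - xl) \<in> A xl" for lam xl
  proof -
    define r where "r = norm (x - xl)"
    have mono_i: "lam * ((xl - yi) \<bullet> yis) \<le> (xl - yi) \<bullet> (x - xl)" if "yis \<in> A yi" for yi yis
    proof -
      have "0 \<le> (xl - yi) \<bullet> ((1/lam) *\<^sub>R (x - xl) - yis)" by (rule maxmono_mono[OF mm xl that])
      then have "0 \<le> lam * ((xl - yi) \<bullet> ((1/lam) *\<^sub>R (x - xl) - yis))" using lam by simp
      also have "\<dots> = (xl - yi) \<bullet> (x - xl) - lam * ((xl - yi) \<bullet> yis)"
        using lam by (simp add: inner_diff_right algebra_simps)
      finally show ?thesis by simp
    qed
    have bnd_i: "- (K * (r + C)) \<le> (xl - yi) \<bullet> yis" if "norm yis \<le> K" "norm (x - yi) \<le> C" for yi yis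
    proof -
      have "norm (xl - yi) \<le> r + C" using that norm_triangle_ineq[of "xl - x" "x - yi"]
        by (simp add: r_def norm_minus_commute)
      then have "norm (xl - yi) * norm yis \<le> (r + C) * K"
        using that C0 by (intro mult_mono) (auto simp: r_def)
      moreover have "- ((xl - yi) \<bullet> yis) \<le> norm (xl - yi) * norm yis"
        using Cauchy_Schwarz_ineq2[of "xl - yi" yis] by linarith
      ultimately show ?thesis by (simp add: algebra_simps)
    qed
    have b1: "- (K * (r + C)) \<le> (xl - y1) \<bullet> y1s" by (rule bnd_i) (auto simp: K_def C_def)
    have b2: "- (K * (r + C)) \<le> (xl - y2) \<bullet> y2s" by (rule bnd_i) (auto simp: K_def C_def)
    have comb: "(1 - t) * ((xl - y1) \<bullet> (x - xl)) + t * ((xl - y2) \<bullet> (x - xl)) = - (r^2)"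
    proof -
      have "(1 - t) * ((xl - y1) \<bullet> (x - xl)) + t * ((xl - y2) \<bullet> (x - xl))
          = ((1 - t) *\<^sub>R (xl - y1) + t *\<^sub>R (xl - y2)) \<bullet> (x - xl)"
        by (simp add: inner_add_left)
      also have "(1 - t) *\<^sub>R (xl - y1) + t *\<^sub>R (xl - y2) = xl - x"
        by (simp add: x_def algebra_simps)
      also have "(xl - x) \<bullet> (x - xl) = - (r^2)"
        by (simp add: r_def power2_norm_eq_inner inner_diff_left inner_diff_right inner_commute)
      finally show ?thesis .
    qed
    have m1: "(1 - t) * (lam * ((xl - y1) \<bullet> y1s)) \<le> (1 - t) * ((xl - y1) \<bullet> (x - xl))"
      using mono_i[OF y1] t by (intro mult_left_mono) auto
    have m2: "t * (lam * ((xl - y2) \<bullet> y2s)) \<le> t * ((xl - y2) \<bullet> (x - xl))"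
      using mono_i[OF y2] t by (intro mult_left_mono) auto
    have n1: "(1 - t) * (lam * (- (K * (r + C)))) \<le> (1 - t) * (lam * ((xl - y1) \<bullet> y1s))"
      using b1 t lam by (intro mult_left_mono) auto
    have n2: "t * (lam * (- (K * (r + C)))) \<le> t * (lam * ((xl - y2) \<bullet> y2s))"
      using b2 t lam by (intro mult_left_mono) auto
    have "(1 - t) * (lam * (- (K * (r + C)))) + t * (lam * (- (K * (r + C)))) = - (lam * (K * (r + C)))"
      by (simp add: algebra_simps)
    then have "r^2 \<le> lam * (K * (r + C))" using m1 m2 n1 n2 comb by linarith
    then show ?thesis by (simp add: r_def)
  qed
  have "\<exists>d\<in>dom_op A. dist d x < e" if e: "e > 0" for e
  proof -
    define lam where "lam = min 1 (e^2) / (2 * (K * (1 + C) + 1))"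
    have "0 \<le> K * (1 + C)" using K0 C0 by simp
    then have den: "0 < 2 * (K * (1 + C) + 1)" by argo
    have lam0: "0 < lam" using e den by (simp add: lam_def)
    have "lam * (K * (1 + C)) < min 1 (e^2)"
    proof -
      have "lam * (K * (1 + C)) \<le> lam * (2 * (K * (1 + C) + 1)) / 2" using lam0 K0 C0
        by (simp add: algebra_simps)
      also have "\<dots> = min 1 (e^2) / 2" using den by (simp add: lam_def)
      also have "\<dots> < min 1 (e^2)"
      proof -
        have "0 < min 1 (e^2)" using e by simp
        then show ?thesis by argo
      qed
      finally show ?thesis .
    qed
    then have sm: "lam * (K * (1 + C)) < 1" "lam * (K * (1 + C)) < e^2" by auto
    obtain xl where xl: "(1/lam) *\<^sub>R (x - xl) \<in> A xl" using minty_scaled[OF mm lam0] by blast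
    have "norm (x - xl) < e"
      by (rule small_r[OF norm_ge_zero bound[OF lam0 xl] lam0 C0 K0 sm e])
    moreover have "xl \<in> dom_op A" using xl by (auto simp: dom_op_def)
    ultimately show ?thesis by (auto simp: dist_norm norm_minus_commute)
  qed
  then show ?thesis unfolding x_def[symmetric] by (simp add: closure_approachable)
qed

lemma cl_dom_convex:
  fixes A :: "'a::{real_inner,complete_space} \<Rightarrow> 'a set"
  assumes mm: "max_monotone_op A"
  shows "convex (closure (dom_op A))"
proof (rule convexI)
  fix a b :: 'a and u v :: real
  assume a: "a \<in> closure (dom_op A)" and b: "b \<in> closure (dom_op A)" and uv: "0 \<le> u" "0 \<le> v" "u + v = 1"
  obtain f where f: "\<And>n. f n \<in> dom_op A" "f \<longlonglongrightarrow> a" using a closure_sequential by metis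
  obtain g where g: "\<And>n. g n \<in> dom_op A" "g \<longlonglongrightarrow> b" using b closure_sequential by metis
  have inS: "(1 - v) *\<^sub>R f n + v *\<^sub>R g n \<in> closure (dom_op A)" for n
  proof -
    obtain fs where "fs \<in> A (f n)" using f(1)[of n] by (auto simp: dom_op_def)
    moreover obtain gs where "gs \<in> A (g n)" using g(1)[of n] by (auto simp: dom_op_def)
    ultimately show ?thesis using dom_segment_closure[OF mm] uv by auto
  qed
  have lim: "(\<lambda>n. (1 - v) *\<^sub>R f n + v *\<^sub>R g n) \<longlonglongrightarrow> (1 - v) *\<^sub>R a + v *\<^sub>R b"
    by (intro tendsto_intros f g)
  have "(1 - v) *\<^sub>R a + v *\<^sub>R b \<in> closure (dom_op A)"
    by (rule closed_sequentially[OF closed_closure _ lim]) (use inS in blast)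
  moreover have "u = 1 - v" using uv by simp
  ultimately show "u *\<^sub>R a + v *\<^sub>R b \<in> closure (dom_op A)" by simp
qed

lemma dom_inv_op: "dom_op (inv_op A) = ran_op A"
  by (auto simp: dom_op_def inv_op_def ran_op_def)

lemma ran_inv_op: "ran_op (inv_op A) = dom_op A"
  by (auto simp: dom_op_def inv_op_def ran_op_def)

lemma cl_ran_convex:
  fixes A :: "'a::{real_inner,complete_space} \<Rightarrow> 'a set"
  assumes mm: "max_monotone_op A"
  shows "convex (closure (ran_op A))"
  using cl_dom_convex[OF maxmono_inv[OF mm]] by (simp add: dom_inv_op)

lemma recession:
  fixes A :: "'a::{real_inner,complete_space} \<Rightarrow> 'a set"
  assumes mm: "max_monotone_op A" and dom: "\<And>a. a \<in> dom_op A \<Longrightarrow> a \<bullet> n \<le> c"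
    and as: "as \<in> A a" and s: "0 \<le> s"
  shows "as + s *\<^sub>R n \<in> closure (ran_op A)"
  unfolding closure_approachable
proof (intro allI impI)
  fix e :: real assume e: "0 < e"
  have aD: "a \<in> dom_op A" using as by (auto simp: dom_op_def)
  define Kc where "Kc = c - a \<bullet> n"
  have Kc0: "0 \<le> Kc" using dom[OF aD] by (simp add: Kc_def)
  define mu where "mu = (s * Kc + 1) / e^2"
  have mu0: "0 < mu" using e s Kc0 by (simp add: mu_def add_nonneg_pos)
  define z where "z = a + mu *\<^sub>R (as + s *\<^sub>R n)"
  obtain y where ys: "(1/mu) *\<^sub>R (z - y) \<in> A y" using minty_scaled[OF mm mu0] by blast
  define d where "d = y - a"
  have diff: "(1/mu) *\<^sub>R (z - y) - (as + s *\<^sub>R n) = - ((1/mu) *\<^sub>R d)"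
    using mu0 by (simp add: z_def d_def algebra_simps)
  have "0 \<le> (y - a) \<bullet> ((1/mu) *\<^sub>R (z - y) - as)" by (rule maxmono_mono[OF mm ys as])
  also have "(1/mu) *\<^sub>R (z - y) - as = - ((1/mu) *\<^sub>R d) + s *\<^sub>R n" using diff by (simp add: algebra_simps)
  also have "(y - a) \<bullet> (- ((1/mu) *\<^sub>R d) + s *\<^sub>R n) = - ((1/mu) * (d \<bullet> d)) + s * (d \<bullet> n)"
    by (simp add: d_def inner_add_right inner_diff_right)
  finally have "(1/mu) * (d \<bullet> d) \<le> s * (d \<bullet> n)" by simp
  moreover have "d \<bullet> n \<le> Kc" using dom[of y] ys by (auto simp: d_def Kc_def dom_op_def inner_diff_left)
  then have "s * (d \<bullet> n) \<le> s * Kc" using s by (rule mult_left_mono)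
  ultimately have dd: "(1/mu) * (d \<bullet> d) \<le> s * Kc" by linarith
  have "(norm ((1/mu) *\<^sub>R (z - y) - (as + s *\<^sub>R n)))\<^sup>2 = (1/mu) * ((1/mu) * (d \<bullet> d))"
    unfolding diff power2_norm_eq_inner by simp
  also have "\<dots> \<le> (1/mu) * (s * Kc)" using dd mu0 by (intro mult_left_mono) auto
  also have "\<dots> < e^2"
  proof -
    have "(1/mu) * (s * Kc) = (s * Kc) * e^2 / (s * Kc + 1)" using e by (simp add: mu_def)
    also have "\<dots> < e^2"
    proof -
      have "0 \<le> s*Kc" using s Kc0 by simp
      then have sk: "0 < s*Kc + 1" by argo
      have "s*Kc*e^2 < e^2*(s*Kc+1)" using e by (simp add: algebra_simps)
      then show ?thesis using pos_divide_less_eq[OF sk] by simp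
    qed
    finally show ?thesis .
  qed
  finally have "norm ((1/mu) *\<^sub>R (z - y) - (as + s *\<^sub>R n)) < e"
    using e by (simp add: power_less_imp_less_base)
  moreover have "(1/mu) *\<^sub>R (z - y) \<in> ran_op A" using ys by (auto simp: ran_op_def)
  ultimately show "\<exists>y\<in>ran_op A. dist y (as + s *\<^sub>R n) < e" by (auto simp: dist_norm)
qed

lemma closure_diff_set_convex:
  fixes S T :: "'a::real_normed_vector set"
  assumes "convex (closure S)" "convex (closure T)"
  shows "convex (closure {a - b | a b. a \<in> S \<and> b \<in> T})"
proof -
  define E where "E = {a - b | a b. a \<in> closure S \<and> b \<in> closure T}"
  have "E = (\<Union>x\<in>closure S. \<Union>y\<in>closure T. {x - y})" by (auto simp: E_def)
  then have cE: "convex E" using convex_differences[OF assms] by simp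
  have s1: "{a - b | a b. a \<in> S \<and> b \<in> T} \<subseteq> E" by (auto simp: E_def dest: closure_subset[THEN subsetD])
  have s2: "E \<subseteq> closure {a - b | a b. a \<in> S \<and> b \<in> T}"
  proof
    fix x assume "x \<in> E"
    then obtain a b where x: "x = a - b" "a \<in> closure S" "b \<in> closure T" by (auto simp: E_def)
    obtain f where f: "\<And>n. f n \<in> S" "f \<longlonglongrightarrow> a" using x(2) closure_sequential by metis
    obtain g where g: "\<And>n. g n \<in> T" "g \<longlonglongrightarrow> b" using x(3) closure_sequential by metis
    have lim: "(\<lambda>n. f n - g n) \<longlonglongrightarrow> a - b" by (intro tendsto_intros f g)
    have mem: "\<And>n. f n - g n \<in> {a - b | a b. a \<in> S \<and> b \<in> T}" using f g by blast
    show "x \<in> closure {a - b | a b. a \<in> S \<and> b \<in> T}" unfolding x(1) closure_sequential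
      by (intro exI[of _ "\<lambda>n. f n - g n"] conjI allI mem lim)
  qed
  have "closure {a - b | a b. a \<in> S \<and> b \<in> T} \<subseteq> closure E" by (rule closure_mono[OF s1])
  moreover have "closure E \<subseteq> closure {a - b | a b. a \<in> S \<and> b \<in> T}" using closure_mono[OF s2] by simp
  ultimately have "closure {a - b | a b. a \<in> S \<and> b \<in> T} = closure E" by (rule subset_antisym)
  then show ?thesis using cE convex_closure by simp
qed

lemma closure_sum_set_convex:
  fixes S T :: "'a::real_normed_vector set"
  assumes "convex (closure S)" "convex (closure T)"
  shows "convex (closure {a + b | a b. a \<in> S \<and> b \<in> T})"
proof -
  define E where "E = {a + b | a b. a \<in> closure S \<and> b \<in> closure T}"
  have "E = (\<Union>x\<in>closure S. \<Union>y\<in>closure T. {x + y})" by (auto simp: E_def)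
  then have cE: "convex E" using convex_sums[OF assms] by simp
  have s1: "{a + b | a b. a \<in> S \<and> b \<in> T} \<subseteq> E" by (auto simp: E_def dest: closure_subset[THEN subsetD])
  have s2: "E \<subseteq> closure {a + b | a b. a \<in> S \<and> b \<in> T}"
  proof
    fix x assume "x \<in> E"
    then obtain a b where x: "x = a + b" "a \<in> closure S" "b \<in> closure T" by (auto simp: E_def)
    obtain f where f: "\<And>n. f n \<in> S" "f \<longlonglongrightarrow> a" using x(2) closure_sequential by metis
    obtain g where g: "\<And>n. g n \<in> T" "g \<longlonglongrightarrow> b" using x(3) closure_sequential by metis
    have lim: "(\<lambda>n. f n + g n) \<longlonglongrightarrow> a + b" by (intro tendsto_intros f g)
    have mem: "\<And>n. f n + g n \<in> {a + b | a b. a \<in> S \<and> b \<in> T}" using f g by blast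
    show "x \<in> closure {a + b | a b. a \<in> S \<and> b \<in> T}" unfolding x(1) closure_sequential
      by (intro exI[of _ "\<lambda>n. f n + g n"] conjI allI mem lim)
  qed
  have "closure {a + b | a b. a \<in> S \<and> b \<in> T} \<subseteq> closure E" by (rule closure_mono[OF s1])
  moreover have "closure E \<subseteq> closure {a + b | a b. a \<in> S \<and> b \<in> T}" using closure_mono[OF s2] by simp
  ultimately have "closure {a + b | a b. a \<in> S \<and> b \<in> T} = closure E" by (rule subset_antisym)
  then show ?thesis using cE convex_closure by simp
qed

lemma closure_sum_mem:
  fixes S T :: "'a::real_normed_vector set"
  assumes "a \<in> closure S" "b \<in> closure T"
  shows "a + b \<in> closure {a + b | a b. a \<in> S \<and> b \<in> T}"
proof -
  obtain f where f: "\<And>n. f n \<in> S" "f \<longlonglongrightarrow> a" using assms(1) closure_sequential by metis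
  obtain g where g: "\<And>n. g n \<in> T" "g \<longlonglongrightarrow> b" using assms(2) closure_sequential by metis
  have lim: "(\<lambda>n. f n + g n) \<longlonglongrightarrow> a + b" by (intro tendsto_intros f g)
  have mem: "\<And>n. f n + g n \<in> {a + b | a b. a \<in> S \<and> b \<in> T}" using f g by blast
  show ?thesis unfolding closure_sequential
    by (intro exI[of _ "\<lambda>n. f n + g n"] conjI allI mem lim)
qed

lemma closure_diff_mem:
  fixes S T :: "'a::real_normed_vector set"
  assumes "a \<in> closure S" "b \<in> closure T"
  shows "a - b \<in> closure {a - b | a b. a \<in> S \<and> b \<in> T}"
proof -
  obtain f where f: "\<And>n. f n \<in> S" "f \<longlonglongrightarrow> a" using assms(1) closure_sequential by metis
  obtain g where g: "\<And>n. g n \<in> T" "g \<longlonglongrightarrow> b" using assms(2) closure_sequential by metis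
  have lim: "(\<lambda>n. f n - g n) \<longlonglongrightarrow> a - b" by (intro tendsto_intros f g)
  have mem: "\<And>n. f n - g n \<in> {a - b | a b. a \<in> S \<and> b \<in> T}" using f g by blast
  show ?thesis unfolding closure_sequential
    by (intro exI[of _ "\<lambda>n. f n - g n"] conjI allI mem lim)
qed

lemma closure_shift_mem:
  fixes S :: "'a::real_normed_vector set"
  assumes "\<And>r. r \<in> S \<Longrightarrow> r + w \<in> closure S" "x \<in> closure S"
  shows "x + w \<in> closure S"
proof -
  obtain f where f: "\<And>n. f n \<in> S" "f \<longlonglongrightarrow> x" using assms(2) closure_sequential by metis
  have lim: "(\<lambda>n. f n + w) \<longlonglongrightarrow> x + w" by (intro tendsto_intros f)
  have mem: "\<And>n. f n + w \<in> closure S" using f assms(1) by blast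
  show ?thesis by (rule closed_sequentially[OF closed_closure _ lim]) (use mem in blast)
qed

lemma nsq_add: "(norm (x + y))\<^sup>2 = (norm x)\<^sup>2 + 2*(x \<bullet> y) + (norm (y::'a::real_inner))\<^sup>2"
  unfolding power2_norm_eq_inner by (simp add: inner_add_left inner_add_right inner_commute)

lemma nsq_diff: "(norm (x - y))\<^sup>2 = (norm x)\<^sup>2 - 2*(x \<bullet> y) + (norm (y::'a::real_inner))\<^sup>2"
  unfolding power2_norm_eq_inner by (simp add: inner_diff_left inner_diff_right inner_commute)

lemma firm_identity:
  fixes a as b bs a' as' b' bs' :: "'a::real_inner"
  assumes "a - as = b + bs" "a' - as' = b' + bs'"
  shows "(norm ((a + as) - (a' + as')))\<^sup>2 - (norm ((as + b) - (as' + b')))\<^sup>2 - (norm ((a - b) - (a' - b')))\<^sup>2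
    = 2 * ((a - a') \<bullet> (as - as')) + 2 * ((b - b') \<bullet> (bs - bs'))"
proof -
  have bs: "bs - bs' = (a - a') - (as - as') - (b - b')" using assms by (simp add: algebra_simps)
  define da where "da = a - a'"
  define das where "das = as - as'"
  define db where "db = b - b'"
  have e1: "(a + as) - (a' + as') = da + das" by (simp add: da_def das_def)
  have e2: "(as + b) - (as' + b') = das + db" by (simp add: db_def das_def)
  have e3: "(a - b) - (a' - b') = da - db" by (simp add: da_def db_def)
  have e4: "db \<bullet> (da - das - db) = db \<bullet> da - db \<bullet> das - (norm db)\<^sup>2"
    by (simp add: inner_diff_right power2_norm_eq_inner)
  have c1: "das \<bullet> db = db \<bullet> das" "da \<bullet> db = db \<bullet> da" by (simp_all add: inner_commute)
  have n1: "(norm (da + das))\<^sup>2 = (norm da)\<^sup>2 + 2*(da \<bullet> das) + (norm das)\<^sup>2" by (rule nsq_add)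
  have n2: "(norm (das + db))\<^sup>2 = (norm das)\<^sup>2 + 2*(db \<bullet> das) + (norm db)\<^sup>2"
    using nsq_add[of das db] c1 by simp
  have n3: "(norm (da - db))\<^sup>2 = (norm da)\<^sup>2 - 2*(db \<bullet> da) + (norm db)\<^sup>2"
    using nsq_diff[of da db] c1 by simp
  have lhs: "(norm ((a + as) - (a' + as')))\<^sup>2 - (norm ((as + b) - (as' + b')))\<^sup>2 - (norm ((a - b) - (a' - b')))\<^sup>2
     = (norm (da + das))\<^sup>2 - (norm (das + db))\<^sup>2 - (norm (da - db))\<^sup>2" by (simp only: e1 e2 e3)
  have rhs: "2 * ((a - a') \<bullet> (as - as')) + 2 * ((b - b') \<bullet> (bs - bs')) = 2 * (da \<bullet> das) + 2 * (db \<bullet> (da - das - db))"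
    by (simp only: bs da_def das_def db_def)
  have arith: "\<And>A B C D E F::real. (A + 2*B + C) - (C + 2*D + E) - (A - 2*F + E) = 2*B + 2*(F - D - E)"
    by (simp add: algebra_simps)
  show ?thesis unfolding lhs rhs e4 n1 n2 n3 by (rule arith)
qed

theorem proposition5p1:
  fixes A B :: "'a::{real_inner, complete_space} \<Rightarrow> 'a set"
    and T :: "'a \<Rightarrow> 'a" and v vD vR x :: 'a and D R :: "'a set"
  assumes "max_monotone_op A" and "max_monotone_op B"
    and T_def: "T = (\<lambda>z. z - resolvent A z + resolvent B (reflected_resolvent A z))"
    and v_def: "v = proj (closure (range (\<lambda>z. z - T z))) 0"
    and D_def: "D = {a - b | a b. a \<in> dom_op A \<and> b \<in> dom_op B}"
    and R_def: "R = {a + b | a b. a \<in> ran_op A \<and> b \<in> ran_op B}"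
    and vD_def: "vD = proj (closure D) 0"
    and vR_def: "vR = proj (closure R) 0"
    and "closure (range (\<lambda>z. z - T z)) = closure (D \<inter> R)"
    and "closure (D \<inter> R) = closure D \<inter> closure R"
  shows "((\<lambda>n. (norm (resolvent A ((T ^^ n) x) - resolvent A ((T ^^ Suc n) x)))\<^sup>2
              + (norm (resolvent (inv_op A) ((T ^^ n) x) - resolvent (inv_op A) ((T ^^ Suc n) x)))\<^sup>2)
           \<longlonglongrightarrow> (norm v)\<^sup>2)
    \<and> (norm v)\<^sup>2 = (norm vD)\<^sup>2 + (norm vR)\<^sup>2
    \<and> ((\<lambda>n. resolvent A ((T ^^ n) x) - resolvent A ((T ^^ Suc n) x)) \<longlonglongrightarrow> vR)
    \<and> ((\<lambda>n. resolvent (inv_op A) ((T ^^ n) x) - resolvent (inv_op A) ((T ^^ Suc n) x)) \<longlonglongrightarrow> vD)"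
proof -
  note mA = assms(1) and mB = assms(2)
  define J where "J = resolvent A"
  define JB where "JB = resolvent B"
  have hJ: "\<And>z. z - J z \<in> A (J z)" using resolvent_in[OF mA] by (simp add: J_def)
  have hJB: "\<And>z. z - JB z \<in> B (JB z)" using resolvent_in[OF mB] by (simp add: JB_def)
  have Jinv: "\<And>z. resolvent (inv_op A) z = z - J z" using resolvent_inv[OF mA] by (simp add: J_def)
  have Tz: "\<And>z. T z = z - J z + JB (2 *\<^sub>R J z - z)"
    by (simp add: T_def J_def JB_def reflected_resolvent_def)
  define C where "C = closure (range (\<lambda>z. z - T z))"
  have CDR: "C = closure D \<inter> closure R" using assms(9,10) by (simp add: C_def)
  define a0 where "a0 = J 0"
  define a0s where "a0s = 0 - J 0"
  define b0 where "b0 = JB 0"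
  have a0: "a0s \<in> A a0" using hJ[of 0] by (simp add: a0_def a0s_def)
  have b0: "0 - JB 0 \<in> B b0" using hJB[of 0] by (simp add: b0_def)
  have a0d: "a0 \<in> dom_op A" using a0 by (auto simp: dom_op_def)
  have b0d: "b0 \<in> dom_op B" using b0 by (auto simp: dom_op_def)
  have a0r: "a0s \<in> ran_op A" using a0 by (auto simp: ran_op_def)
  have cD: "convex (closure D)" unfolding D_def
    by (rule closure_diff_set_convex[OF cl_dom_convex[OF mA] cl_dom_convex[OF mB]])
  have cR: "convex (closure R)" unfolding R_def
    by (rule closure_sum_set_convex[OF cl_ran_convex[OF mA] cl_ran_convex[OF mB]])
  have "a0 - b0 \<in> D" unfolding D_def using a0d b0d by blast
  then have neD: "closure D \<noteq> {}" using closure_subset by blast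
  have neR: "closure R \<noteq> {}"
  proof -
    obtain b0s where "b0s \<in> ran_op B" using b0 by (auto simp: ran_op_def)
    then have "a0s + b0s \<in> R" using a0r unfolding R_def by blast
    then show ?thesis using closure_subset by blast
  qed
  have vD_in: "vD \<in> closure D" and vDv: "\<And>y. y \<in> closure D \<Longrightarrow> 0 \<le> (y - vD) \<bullet> vD"
    using proj0[OF closed_closure cD neD] by (auto simp: vD_def)
  have vR_in: "vR \<in> closure R" and vRv: "\<And>y. y \<in> closure R \<Longrightarrow> 0 \<le> (y - vR) \<bullet> vR"
    using proj0[OF closed_closure cR neR] by (auto simp: vR_def)
  have cC: "convex C" using cD cR CDR by (simp add: convex_Int)
  have neC: "C \<noteq> {}" unfolding C_def using closure_subset by blast
  have v_in: "v \<in> C" and vmin: "\<And>y. y \<in> C \<Longrightarrow> norm v \<le> norm y"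
    using proj0[of C] cC neC by (auto simp: v_def C_def)
  have R1: "ax - vD \<in> closure (ran_op A)" if "ax \<in> A a" for ax a
  proof -
    have "a' \<bullet> (- vD) \<le> - (b0 \<bullet> vD) - vD \<bullet> vD" if "a' \<in> dom_op A" for a'
    proof -
      have "a' - b0 \<in> D" unfolding D_def using that b0d by blast
      then have "a' - b0 \<in> closure D" using closure_subset by blast
      then have "0 \<le> (a' - b0 - vD) \<bullet> vD" by (rule vDv)
      then show ?thesis by (simp add: inner_diff_left)
    qed
    from recession[OF mA this \<open>ax \<in> A a\<close>, of 1] show ?thesis by simp
  qed
  have R2: "bx + vD \<in> closure (ran_op B)" if "bx \<in> B b" for bx b
  proof -
    have "b' \<bullet> vD \<le> a0 \<bullet> vD - vD \<bullet> vD" if "b' \<in> dom_op B" for b'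
    proof -
      have "a0 - b' \<in> D" unfolding D_def using that a0d by blast
      then have "a0 - b' \<in> closure D" using closure_subset by blast
      then have "0 \<le> (a0 - b' - vD) \<bullet> vD" by (rule vDv)
      then show ?thesis by (simp add: inner_diff_left)
    qed
    from recession[OF mB this \<open>bx \<in> B b\<close>, of 1] show ?thesis by simp
  qed
  have R3: "b - vR \<in> closure (dom_op B)" if bd: "b \<in> dom_op B" for b
  proof -
    obtain bx where bx: "bx \<in> B b" using bd unfolding dom_op_def by blast
    have "bs' \<bullet> (- vR) \<le> a0s \<bullet> vR - vR \<bullet> vR" if "bs' \<in> dom_op (inv_op B)" for bs'
    proof -
      have "bs' \<in> ran_op B" using that by (simp add: dom_inv_op)
      then have "a0s + bs' \<in> R" unfolding R_def using a0r by blast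
      then have "a0s + bs' \<in> closure R" using closure_subset by blast
      then have "0 \<le> (a0s + bs' - vR) \<bullet> vR" by (rule vRv)
      then show ?thesis by (simp add: inner_add_left inner_diff_left)
    qed
    moreover have "b \<in> inv_op B bx" using bx by (simp add: inv_op_def)
    ultimately have "b + 1 *\<^sub>R (- vR) \<in> closure (ran_op (inv_op B))"
      by (intro recession[OF maxmono_inv[OF mB]]) auto
    then show ?thesis by (simp add: ran_inv_op)
  qed
  have W1: "vR + (- vD) \<in> closure R"
  proof (rule closure_shift_mem[OF _ vR_in])
    fix r assume "r \<in> R"
    then obtain ax bx where r: "r = ax + bx" "ax \<in> ran_op A" "bx \<in> ran_op B" unfolding R_def by auto
    have "ax - vD \<in> closure (ran_op A)" using r(2) R1 by (auto simp: ran_op_def)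
    moreover have "bx \<in> closure (ran_op B)" using r(3) closure_subset by blast
    ultimately have "(ax - vD) + bx \<in> closure R" unfolding R_def by (rule closure_sum_mem)
    then show "r + - vD \<in> closure R" using r(1) by (simp add: algebra_simps)
  qed
  have W2: "vR + vD \<in> closure R"
  proof (rule closure_shift_mem[OF _ vR_in])
    fix r assume "r \<in> R"
    then obtain ax bx where r: "r = ax + bx" "ax \<in> ran_op A" "bx \<in> ran_op B" unfolding R_def by auto
    have "bx + vD \<in> closure (ran_op B)" using r(3) R2 by (auto simp: ran_op_def)
    moreover have "ax \<in> closure (ran_op A)" using r(2) closure_subset by blast
    ultimately have "ax + (bx + vD) \<in> closure R" unfolding R_def by (intro closure_sum_mem)
    then show "r + vD \<in> closure R" using r(1) by (simp add: algebra_simps)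
  qed
  have W3: "vD + vR \<in> closure D"
  proof (rule closure_shift_mem[OF _ vD_in])
    fix d assume "d \<in> D"
    then obtain a b where d: "d = a - b" "a \<in> dom_op A" "b \<in> dom_op B" unfolding D_def by auto
    have "b - vR \<in> closure (dom_op B)" using d(3) R3 by blast
    moreover have "a \<in> closure (dom_op A)" using d(2) closure_subset by blast
    ultimately have "a - (b - vR) \<in> closure D" unfolding D_def by (intro closure_diff_mem)
    moreover have "d + vR = a - (b - vR)" using d(1) by simp
    ultimately show "d + vR \<in> closure D" by metis
  qed
  have o1: "0 \<le> - (vD \<bullet> vR)" using vRv[OF W1] by (simp add: inner_commute)
  have o2: "0 \<le> vD \<bullet> vR" using vRv[OF W2] by (simp add: inner_commute)
  have orth: "vD \<bullet> vR = 0" using o1 o2 by linarith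
  have wC: "vD + vR \<in> C" using W2 W3 CDR by (simp add: add.commute)
  have nw: "(norm (vD + vR))\<^sup>2 = (norm vD)\<^sup>2 + (norm vR)\<^sup>2" using nsq_add[of vD vR] orth by simp
  have vle: "(norm v)\<^sup>2 \<le> (norm vD)\<^sup>2 + (norm vR)\<^sup>2"
    using vmin[OF wC] nw by (metis norm_ge_zero power_mono)
  have firm: "(norm (T p - T q))\<^sup>2 + (norm ((p - T p) - (q - T q)))\<^sup>2 \<le> (norm (p - q))\<^sup>2" for p q
  proof -
    define ap where "ap = J p"
    define aps where "aps = p - J p"
    define bp where "bp = JB (2 *\<^sub>R J p - p)"
    define bps where "bps = (2 *\<^sub>R J p - p) - bp"
    define aq where "aq = J q"
    define aqs where "aqs = q - J q"
    define bq where "bq = JB (2 *\<^sub>R J q - q)"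
    define bqs where "bqs = (2 *\<^sub>R J q - q) - bq"
    have e1: "ap - aps = bp + bps" by (simp add: ap_def aps_def bps_def algebra_simps scaleR_2)
    have e2: "aq - aqs = bq + bqs" by (simp add: aq_def aqs_def bqs_def algebra_simps scaleR_2)
    have pe: "p = ap + aps" "q = aq + aqs" by (simp_all add: ap_def aps_def aq_def aqs_def)
    have Tpe: "T p = aps + bp" "T q = aqs + bq" by (simp_all add: Tz ap_def aps_def bp_def aq_def aqs_def bq_def)
    have Upe: "p - T p = ap - bp" "q - T q = aq - bq" by (simp_all add: Tz ap_def bp_def aq_def bq_def)
    have mA': "0 \<le> (ap - aq) \<bullet> (aps - aqs)"
      using maxmono_mono[OF mA hJ[of p] hJ[of q]] by (simp add: ap_def aps_def aq_def aqs_def)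
    have mB': "0 \<le> (bp - bq) \<bullet> (bps - bqs)"
      using maxmono_mono[OF mB hJB[of "2 *\<^sub>R J p - p"] hJB[of "2 *\<^sub>R J q - q"]]
      by (simp add: bp_def bps_def bq_def bqs_def)
    have "(norm ((ap + aps) - (aq + aqs)))\<^sup>2 - (norm ((aps + bp) - (aqs + bq)))\<^sup>2 - (norm ((ap - bp) - (aq - bq)))\<^sup>2
      = 2 * ((ap - aq) \<bullet> (aps - aqs)) + 2 * ((bp - bq) \<bullet> (bps - bqs))" by (rule firm_identity[OF e1 e2])
    then have "0 \<le> (norm ((ap + aps) - (aq + aqs)))\<^sup>2 - (norm ((aps + bp) - (aqs + bq)))\<^sup>2 - (norm ((ap - bp) - (aq - bq)))\<^sup>2"
      using mA' mB' by argo
    moreover have q1: "p - T p - (q - T q) = (ap - bp) - (aq - bq)" by (simp only: Upe)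
    moreover have q2: "T p - T q = (aps + bp) - (aqs + bq)" by (simp only: Tpe)
    moreover have q3: "p - q = (ap + aps) - (aq + aqs)" by (simp only: pe)
    ultimately show ?thesis unfolding q1 q2 q3 by argo
  qed
  have nonexp: "norm (T p - T q) \<le> norm (p - q)" for p q
  proof -
    have "(norm (T p - T q))\<^sup>2 \<le> (norm (p - q))\<^sup>2" using firm[of p q] zero_le_power2[of "norm ((p - T p) - (q - T q))"] by argo
    then show ?thesis using norm_ge_zero power2_le_imp_le by blast
  qed
  define z where "z n = (T ^^ n) x" for n
  define a where "a n = J (z n)" for n
  define ax where "ax n = z n - a n" for n
  define b where "b n = JB (2 *\<^sub>R a n - z n)" for n
  define bx where "bx n = (2 *\<^sub>R a n - z n) - b n" for n
  define u where "u n = z n - z (Suc n)" for n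
  define da where "da n = a n - a (Suc n)" for n
  define dax where "dax n = ax n - ax (Suc n)" for n
  have zS: "z (Suc n) = T (z n)" for n by (simp add: z_def)
  have axA: "ax n \<in> A (a n)" for n using hJ by (simp add: a_def ax_def)
  have bxB: "bx n \<in> B (b n)" for n using hJB by (simp add: b_def bx_def)
  have zS2: "z (Suc n) = ax n + b n" for n by (simp add: zS Tz a_def ax_def b_def)
  have zsplit: "z n = a n + ax n" for n by (simp add: ax_def)
  have bxe: "bx n = a n - ax n - b n" for n by (simp add: bx_def ax_def algebra_simps scaleR_2)
  have ue: "u n = da n + dax n" for n by (simp add: u_def da_def dax_def ax_def)
  have dae: "da n = ax (Suc n) + bx n" for n
  proof -
    have "a (Suc n) = ax n + b n - ax (Suc n)" using zS2[of n] zsplit[of "Suc n"] by (simp add: algebra_simps)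
    then show ?thesis by (simp add: da_def bxe algebra_simps)
  qed
  have daxe: "dax n = a (Suc n) - b n" for n
  proof -
    have "ax (Suc n) = ax n + b n - a (Suc n)" using zS2[of n] zsplit[of "Suc n"] by (simp add: algebra_simps)
    then show ?thesis by (simp add: dax_def algebra_simps)
  qed
  have daR: "da n \<in> closure R" for n
  proof -
    have "ax (Suc n) \<in> ran_op A" "bx n \<in> ran_op B" using axA bxB by (auto simp: ran_op_def)
    then have "da n \<in> R" unfolding dae R_def by blast
    then show ?thesis using closure_subset by blast
  qed
  have daxD: "dax n \<in> closure D" for n
  proof -
    have "a (Suc n) \<in> dom_op A" "b n \<in> dom_op B" using axA bxB by (auto simp: dom_op_def)
    then have "dax n \<in> D" unfolding daxe D_def by blast
    then show ?thesis using closure_subset by blast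
  qed
  have sq: "(norm (da n))\<^sup>2 + (norm (dax n))\<^sup>2 \<le> (norm (u n))\<^sup>2" for n
  proof -
    have "0 \<le> (a n - a (Suc n)) \<bullet> (ax n - ax (Suc n))" by (rule maxmono_mono[OF mA axA axA])
    then have "0 \<le> da n \<bullet> dax n" by (simp add: da_def dax_def)
    then show ?thesis unfolding ue nsq_add by argo
  qed
  have dR: "(norm (da n - vR))\<^sup>2 \<le> (norm (da n))\<^sup>2 - (norm vR)\<^sup>2" for n
  proof -
    have "0 \<le> (da n - vR) \<bullet> vR" by (rule vRv[OF daR])
    moreover have "(norm (da n))\<^sup>2 = (norm ((da n - vR) + vR))\<^sup>2" by simp
    ultimately show ?thesis unfolding nsq_add by argo
  qed
  have dD: "(norm (dax n - vD))\<^sup>2 \<le> (norm (dax n))\<^sup>2 - (norm vD)\<^sup>2" for n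
  proof -
    have "0 \<le> (dax n - vD) \<bullet> vD" by (rule vDv[OF daxD])
    moreover have "(norm (dax n))\<^sup>2 = (norm ((dax n - vD) + vD))\<^sup>2" by simp
    ultimately show ?thesis unfolding nsq_add by argo
  qed
  have u_in: "u n \<in> C" for n
  proof -
    have "u n = (\<lambda>z. z - T z) (z n)" unfolding u_def zS by (rule refl)
    then have "u n \<in> range (\<lambda>z. z - T z)" by (rule image_eqI) (rule UNIV_I)
    then show ?thesis unfolding C_def by (rule closure_subset[THEN subsetD])
  qed
  have ulow: "norm v \<le> norm (u n)" for n by (rule vmin[OF u_in])
  have uup: "\<exists>N. \<forall>n\<ge>N. norm (u n) < norm v + e" if e: "e > 0" for e
  proof -
    have "v \<in> closure (range (\<lambda>z. z - T z))" using v_in by (simp add: C_def)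
    moreover have "0 < e/2" using e by simp
    ultimately have "\<exists>w\<in>range (\<lambda>z. z - T z). dist w v < e/2"
      unfolding closure_approachable by blast
    then obtain y where wy: "dist (y - T y) v < e/2" by auto
    define w where "w = y - T y"
    have w: "dist w v < e/2" using wy by (simp add: w_def)
    have wy: "w = y - T y" by (simp add: w_def)
    define zy where "zy n = (T ^^ n) y" for n
    define u' where "u' n = zy n - zy (Suc n)" for n
    have zyS: "zy (Suc n) = T (zy n)" for n by (simp add: zy_def)
    have u'mono: "norm (u' n) \<le> norm (u' 0)" for n
    proof (induction n)
      case 0 then show ?case by simp
    next
      case (Suc n)
      have "norm (u' (Suc n)) = norm (T (zy n) - T (zy (Suc n)))" by (simp add: u'_def zyS)
      also have "\<dots> \<le> norm (zy n - zy (Suc n))" by (rule nonexp)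
      also have "\<dots> = norm (u' n)" by (simp add: u'_def)
      finally show ?case using Suc.IH by linarith
    qed
    have u'0: "norm (u' 0) < norm v + e/2"
    proof -
      have "u' 0 = w" by (simp add: u'_def zy_def wy)
      moreover have "norm w \<le> norm v + dist w v" by (metis dist_norm norm_triangle_sub add.commute)
      ultimately show ?thesis using w by simp
    qed
    define ee where "ee n = (norm (z n - zy n))\<^sup>2" for n
    have step: "ee (Suc n) + (norm (u n - u' n))\<^sup>2 \<le> ee n" for n
    proof -
      have "z n - T (z n) - (zy n - T (zy n)) = u n - u' n" by (simp add: u_def u'_def zS zyS)
      moreover have "T (z n) - T (zy n) = z (Suc n) - zy (Suc n)" by (simp add: zS zyS)
      ultimately show ?thesis using firm[of "z n" "zy n"] by (simp add: ee_def)
    qed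
    have partial: "(\<Sum>k<n. (norm (u k - u' k))\<^sup>2) \<le> ee 0 - ee n" for n
    proof (induction n)
      case 0 then show ?case by simp
    next
      case (Suc n) then show ?case using step[of n] by simp
    qed
    have "summable (\<lambda>k. (norm (u k - u' k))\<^sup>2)"
    proof (rule summableI_nonneg_bounded)
      show "0 \<le> (norm (u k - u' k))\<^sup>2" for k by simp
      show "(\<Sum>k<n. (norm (u k - u' k))\<^sup>2) \<le> ee 0" for n
        using partial[of n] by (simp add: ee_def) (smt (verit) zero_le_power2)
    qed
    then have "(\<lambda>k. (norm (u k - u' k))\<^sup>2) \<longlonglongrightarrow> 0" by (rule summable_LIMSEQ_zero)
    moreover have "0 < (e/2)\<^sup>2" using e by simp
    ultimately obtain N where N: "\<And>k. k \<ge> N \<Longrightarrow> norm ((norm (u k - u' k))\<^sup>2 - 0) < (e/2)\<^sup>2"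
      unfolding LIMSEQ_iff by blast
    have "norm (u k) < norm v + e" if k: "k \<ge> N" for k
    proof -
      have "(norm (u k - u' k))\<^sup>2 < (e/2)\<^sup>2" using N[OF k] by simp
      then have "norm (u k - u' k) < e/2" by (rule power_less_imp_less_base) (use e in simp)
      moreover have "norm (u k) \<le> norm (u' k) + norm (u k - u' k)"
        by (metis add.commute diff_add_cancel norm_triangle_ineq)
      ultimately show ?thesis using u'mono[of k] u'0 by linarith
    qed
    then show ?thesis by blast
  qed
  have ulim: "(\<lambda>n. norm (u n)) \<longlonglongrightarrow> norm v"
    unfolding LIMSEQ_iff
  proof (intro allI impI)
    fix r :: real assume r: "0 < r"
    obtain N where N: "\<And>n. n \<ge> N \<Longrightarrow> norm (u n) < norm v + r" using uup[OF r] by blast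
    have "norm (norm (u n) - norm v) < r" if "n \<ge> N" for n
      using N[OF that] ulow[of n] by simp
    then show "\<exists>no. \<forall>n\<ge>no. norm (norm (u n) - norm v) < r" by blast
  qed
  have u2lim: "(\<lambda>n. (norm (u n))\<^sup>2) \<longlonglongrightarrow> (norm v)\<^sup>2" by (intro tendsto_intros ulim)
  define f where "f n = (norm (da n - vR))\<^sup>2 + (norm (dax n - vD))\<^sup>2" for n
  have f0: "0 \<le> f n" for n by (simp add: f_def)
  have fle: "f n \<le> (norm (u n))\<^sup>2 - (norm v)\<^sup>2" for n
    using sq[of n] dR[of n] dD[of n] vle unfolding f_def by linarith
  have "(\<lambda>n. (norm (u n))\<^sup>2 - (norm v)\<^sup>2) \<longlonglongrightarrow> (norm v)\<^sup>2 - (norm v)\<^sup>2"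
    by (intro tendsto_intros u2lim)
  then have gap: "(\<lambda>n. (norm (u n))\<^sup>2 - (norm v)\<^sup>2) \<longlonglongrightarrow> 0" by simp
  have flim: "f \<longlonglongrightarrow> 0"
    by (rule tendsto_sandwich[OF _ _ tendsto_const gap]) (use f0 fle in auto)
  have g1: "(\<lambda>n. (norm (da n - vR))\<^sup>2) \<longlonglongrightarrow> 0"
    by (rule tendsto_sandwich[OF _ _ tendsto_const flim]) (auto simp: f_def)
  have g2: "(\<lambda>n. (norm (dax n - vD))\<^sup>2) \<longlonglongrightarrow> 0"
    by (rule tendsto_sandwich[OF _ _ tendsto_const flim]) (auto simp: f_def)
  have "(\<lambda>n. sqrt ((norm (da n - vR))\<^sup>2)) \<longlonglongrightarrow> sqrt 0" by (intro tendsto_intros g1)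
  then have "(\<lambda>n. norm (da n - vR)) \<longlonglongrightarrow> 0" by simp
  then have daL: "da \<longlonglongrightarrow> vR" by (simp add: tendsto_norm_zero_iff Lim_null[of da])
  have "(\<lambda>n. sqrt ((norm (dax n - vD))\<^sup>2)) \<longlonglongrightarrow> sqrt 0" by (intro tendsto_intros g2)
  then have "(\<lambda>n. norm (dax n - vD)) \<longlonglongrightarrow> 0" by simp
  then have daxL: "dax \<longlonglongrightarrow> vD" by (simp add: tendsto_norm_zero_iff Lim_null[of dax])
  have L: "(\<lambda>n. da n + dax n) \<longlonglongrightarrow> vR + vD" by (intro tendsto_intros daL daxL)
  have "(\<lambda>n. (norm (da n + dax n))\<^sup>2) \<longlonglongrightarrow> (norm (vR + vD))\<^sup>2"
    by (rule tendsto_power[OF tendsto_norm[OF L]])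
  then have "(\<lambda>n. (norm (u n))\<^sup>2) \<longlonglongrightarrow> (norm vD)\<^sup>2 + (norm vR)\<^sup>2"
    using nw by (simp add: ue add.commute)
  then have veq: "(norm v)\<^sup>2 = (norm vD)\<^sup>2 + (norm vR)\<^sup>2" using u2lim LIMSEQ_unique by blast
  have lim1: "(\<lambda>n. (norm (da n))\<^sup>2 + (norm (dax n))\<^sup>2) \<longlonglongrightarrow> (norm v)\<^sup>2"
  proof -
    have "(\<lambda>n. (norm (da n))\<^sup>2 + (norm (dax n))\<^sup>2) \<longlonglongrightarrow> (norm vR)\<^sup>2 + (norm vD)\<^sup>2"
      by (intro tendsto_intros daL daxL)
    then show ?thesis using veq by (simp add: add.commute)
  qed
  have P1: "resolvent A ((T ^^ n) x) - resolvent A ((T ^^ Suc n) x) = da n" for n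
    by (simp only: da_def a_def z_def J_def)
  have P2: "resolvent (inv_op A) ((T ^^ n) x) - resolvent (inv_op A) ((T ^^ Suc n) x) = dax n" for n
    by (simp only: dax_def ax_def a_def z_def Jinv)
  show ?thesis unfolding P1 P2 using lim1 veq daL daxL by blast
qed

end
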